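(* Let $N\ge1$ and define $$p_k=\begin{cases}\tilde n_0,&k=0,\\ \sum_{l=0}^{k}\tilde n_l-k\,\tilde n_{k+1},&k=1,\dots,N-1,\\ -\infty,&k=N.\end{cases}$$ Then for every $k\in\{1,\dots,N\}$ and every $r\in[0,\tilde n_0]$ with $r\ge p_k$, $$d_{(n_0,\dots,n_N)}(r)=d_{(\tilde n_0,\dots,\tilde n_k)}(r).$$
   Context: For a vector $\mathbf n=(n_0,\dots,n_N)$ of positive integers ($N\ge1$), let $\tilde n_0\le\cdots\le\tilde n_N$ be its nondecreasing rearrangement, $n_{\min}=\tilde n_0$, $c_i=1-i+\min_{k'=1,\dots,N}\lfloor(\sum_{l=0}^{k'}\tilde n_l-i)/k'\rfloor$ for $i=1,\dots,n_{\min}$, and $d_{\mathbf n}(k)=\sum_{i=k+1}^{n_{\min}}c_i$ for integers $0\le k\le n_{\min}$; $d_{\mathbf n}(r)$ for real $r\in[0,n_{\min}]$ is the piecewise-linear interpolation of these points. This is the diversity-multiplexing tradeoff of the $(n_0,\dots,n_N)$ Rayleigh product channel $\mathbf y=\sqrt{\mathsf{SNR}/(n_1\cdots n_N)}\mathbf H_1\cdots\mathbf H_N\mathbf x+\mathbf z$ with independent i.i.d. $\mathcal{CN}(0,1)$ matrices $\mathbf H_i\in\mathbb C^{n_{i-1}\times n_i}$. *)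

theory Defs
  imports Complex_Main "HOL-Library.Extended_Real"
begin

text \<open>A vector n = (n_0,...,n_N) is represented as a list of length N+1.
  The nondecreasing rearrangement is sort ns, so tilde n_l = sort ns ! l.\<close>

definition dmt_N :: "nat list \<Rightarrow> nat" where
  "dmt_N ns = length ns - 1"

definition dmt_nmin :: "nat list \<Rightarrow> nat" where
  "dmt_nmin ns = sort ns ! 0"

definition dmt_c :: "nat list \<Rightarrow> nat \<Rightarrow> int" where
  "dmt_c ns i = 1 - int i + Min ((\<lambda>k'. \<lfloor>(real (\<Sum>l=0..k'. sort ns ! l) - real i) / real k'\<rfloor>)
                                  ` {1..dmt_N ns})"

definition dmt_d_nat :: "nat list \<Rightarrow> nat \<Rightarrow> int" where
  "dmt_d_nat ns k = (\<Sum>i=k+1..dmt_nmin ns. dmt_c ns i)"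

definition dmt_d :: "nat list \<Rightarrow> real \<Rightarrow> real" where
  "dmt_d ns r =
     (let k = nat \<lfloor>r\<rfloor> in
      if dmt_nmin ns \<le> k then real_of_int (dmt_d_nat ns (dmt_nmin ns))
      else (1 - (r - real k)) * real_of_int (dmt_d_nat ns k)
           + (r - real k) * real_of_int (dmt_d_nat ns (k + 1)))"

definition dmt_p :: "nat list \<Rightarrow> nat \<Rightarrow> ereal" where
  "dmt_p ns k =
     (if k = 0 then ereal (real (sort ns ! 0))
      else if k < dmt_N ns then
        ereal (real (\<Sum>l=0..k. sort ns ! l) - real k * real (sort ns ! (k + 1)))
      else -\<infinity>)"

end

theory Submission
  imports Defs
begin

lemma chain_step:
  fixes s :: "nat list" and x :: real
  assumes srt: "sorted s" and k1: "1 \<le> k"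
    and hp: "real (\<Sum>l=0..k. s!l) - real k * real (s!(k+1)) < x"
  shows "k \<le> j \<Longrightarrow> j + 1 < length s \<Longrightarrow>
     (real (\<Sum>l=0..k. s!l) - x) / real k \<le> (real (\<Sum>l=0..j. s!l) - x) / real j
     \<and> real (\<Sum>l=0..j. s!l) - x < real j * real (s!(j+1))"
proof (induction j)
  case 0
  then show ?case using k1 by simp
next
  case (Suc j)
  show ?case
  proof (cases "k = Suc j")
    case True
    then show ?thesis using hp by simp
  next
    case False
    with Suc.prems have kj: "k \<le> j" by simp
    from Suc.IH[OF kj] Suc.prems have IH:
      "(real (\<Sum>l=0..k. s!l) - x) / real k \<le> (real (\<Sum>l=0..j. s!l) - x) / real j"
      "real (\<Sum>l=0..j. s!l) - x < real j * real (s!(j+1))" by auto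
    define A where "A = real (\<Sum>l=0..j. s!l) - x"
    define a where "a = real (s!(j+1))"
    have j1: "real j \<ge> 1" using kj k1 by simp
    have eq: "real (\<Sum>l=0..Suc j. s!l) - x = A + a"
      by (simp add: A_def a_def)
    have lt: "A < real j * a" using IH(2) by (simp add: A_def a_def)
    have m1: "A / real j \<le> (A + a) / (real j + 1)"
      using j1 lt by (simp add: field_simps)
    have aa: "a \<le> real (s!(Suc j + 1))"
      using srt Suc.prems unfolding a_def by (simp add: sorted_nth_mono)
    have m2: "A + a < (real j + 1) * real (s!(Suc j + 1))"
    proof -
      have "A + a < (real j + 1) * a" using lt by (simp add: algebra_simps)
      also have "\<dots> \<le> (real j + 1) * real (s!(Suc j + 1))"
        using aa by (intro mult_left_mono) auto
      finally show ?thesis .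
    qed
    show ?thesis using IH(1) m1 m2 eq by (simp add: A_def algebra_simps)
  qed
qed

theorem corollary2:
  fixes ns :: "nat list" and N k :: nat and r :: real
  assumes "length ns = N + 1"
    and "N \<ge> 1"
    and "\<forall>x\<in>set ns. x > 0"
    and "1 \<le> k" and "k \<le> N"
    and "0 \<le> r" and "r \<le> real (sort ns ! 0)"
    and "dmt_p ns k \<le> ereal r"
  shows "dmt_d ns r = dmt_d (take (k + 1) (sort ns)) r"
proof -
  define s where "s = sort ns"
  define ns' where "ns' = take (k+1) s"
  have srt: "sorted s" by (simp add: s_def)
  have ls: "length s = N + 1" using assms(1) by (simp add: s_def)
  have srt': "sort ns' = ns'" unfolding ns'_def using srt
    by (simp add: sorted_sort_id sorted_wrt_take)
  have lns': "length ns' = k + 1" using ls assms(5) by (simp add: ns'_def)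
  have nth': "\<And>l. l \<le> k \<Longrightarrow> ns' ! l = s ! l" by (simp add: ns'_def)
  have N': "dmt_N ns' = k" using lns' by (simp add: dmt_N_def)
  have NN: "dmt_N ns = N" using assms(1) by (simp add: dmt_N_def)
  have nmin: "dmt_nmin ns' = dmt_nmin ns"
    by (simp add: dmt_nmin_def srt' nth' s_def)
  define f where "f = (\<lambda>k' i. \<lfloor>(real (\<Sum>l=0..k'. s ! l) - real i) / real k'\<rfloor>)"
  have cns: "dmt_c ns i = 1 - int i + Min ((\<lambda>k'. f k' i) ` {1..N})" for i
    by (simp add: dmt_c_def NN f_def s_def)
  have cns': "dmt_c ns' i = 1 - int i + Min ((\<lambda>k'. f k' i) ` {1..k})" for i
  proof -
    have "(\<lambda>k'. \<lfloor>(real (\<Sum>l=0..k'. sort ns' ! l) - real i) / real k'\<rfloor>) ` {1..k}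
        = (\<lambda>k'. f k' i) ` {1..k}"
      by (intro image_cong refl) (simp add: srt' nth' f_def)
    then show ?thesis by (simp add: dmt_c_def N')
  qed
  have ceq: "dmt_c ns i = dmt_c ns' i" if ir: "r < real i" for i
  proof (cases "k = N")
    case True then show ?thesis using cns cns' by simp
  next
    case False
    hence kN: "k < N" using assms(5) by simp
    have hp: "real (\<Sum>l=0..k. s!l) - real k * real (s!(k+1)) < real i"
      using assms(8) kN assms(4) ir unfolding dmt_p_def
      by (simp add: NN s_def)
    have ge: "f k i \<le> f j i" if "k \<le> j" "j \<le> N" for j
    proof (cases "j = N")
      case False
      then show ?thesis using chain_step[OF srt assms(4) hp, of j] that ls
        unfolding f_def by (intro floor_mono) simp
    next
      case True
      have "(real (\<Sum>l=0..k. s!l) - real i) / real k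
         \<le> (real (\<Sum>l=0..N-1. s!l) - real i) / real (N-1)"
        and lt: "real (\<Sum>l=0..N-1. s!l) - real i < real (N-1) * real (s!(N-1+1))"
        using chain_step[OF srt assms(4) hp, of "N-1"] kN ls by auto
      moreover have "(real (\<Sum>l=0..N-1. s!l) - real i) / real (N-1)
          \<le> (real (\<Sum>l=0..N. s!l) - real i) / real N"
      proof -
        have NS: "N = Suc (N-1)" using kN by simp
        define A where "A = real (\<Sum>l=0..N-1. s!l) - real i"
        define a where "a = real (s!N)"
        have e: "real (\<Sum>l=0..N. s!l) - real i = A + a"
          proof -
          have "(\<Sum>l=0..N. s!l) = (\<Sum>l=0..Suc (N-1). s!l)" using NS by simp
          also have "\<dots> = (\<Sum>l=0..N-1. s!l) + s!N" using NS by (metis sum.atLeast0_atMost_Suc)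
          finally show ?thesis by (simp add: A_def a_def)
        qed
        have lt2: "A < real (N-1) * a" using lt NS by (simp add: A_def a_def)
        have j1: "real (N-1) \<ge> 1" using kN assms(4) by simp
        have "A / real (N-1) \<le> (A + a) / (real (N-1) + 1)"
          using j1 lt2 by (simp add: field_simps)
        moreover have RN: "real N = real (N-1) + 1" using NS by (metis of_nat_Suc add.commute)
        ultimately show ?thesis unfolding e RN A_def by simp
      qed
      ultimately show ?thesis using True unfolding f_def by (intro floor_mono) simp
    qed
    have fin: "finite ((\<lambda>k'. f k' i) ` {1..k})" "(\<lambda>k'. f k' i) ` {1..k} \<noteq> {}"
      using assms(4) by auto
    have "Min ((\<lambda>k'. f k' i) ` {1..N}) = Min ((\<lambda>k'. f k' i) ` {1..k})"
    proof (rule antisym)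
      show "Min ((\<lambda>k'. f k' i) ` {1..N}) \<le> Min ((\<lambda>k'. f k' i) ` {1..k})"
        using fin assms(5) by (intro Min_antimono) auto
      show "Min ((\<lambda>k'. f k' i) ` {1..k}) \<le> Min ((\<lambda>k'. f k' i) ` {1..N})"
      proof (rule Min.boundedI)
        show "finite ((\<lambda>k'. f k' i) ` {1..N})" by simp
        show "(\<lambda>k'. f k' i) ` {1..N} \<noteq> {}" using assms(2) by auto
        fix y assume "y \<in> (\<lambda>k'. f k' i) ` {1..N}"
        then obtain j where j: "j \<in> {1..N}" "y = f j i" by auto
        show "Min ((\<lambda>k'. f k' i) ` {1..k}) \<le> y"
        proof (cases "j \<le> k")
          case True then show ?thesis using j fin by (intro Min_le) auto
        next
          case False
          have "Min ((\<lambda>k'. f k' i) ` {1..k}) \<le> f k i" using fin assms(4) by (intro Min_le) auto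
          also have "\<dots> \<le> f j i" using ge[of j] False j by auto
          finally show ?thesis using j by simp
        qed
      qed
    qed
    then show ?thesis using cns cns' by simp
  qed
  have deq: "dmt_d_nat ns j = dmt_d_nat ns' j" if "nat \<lfloor>r\<rfloor> \<le> j" for j
    unfolding dmt_d_nat_def nmin
  proof (intro sum.cong refl)
    fix i assume "i \<in> {j+1..dmt_nmin ns}"
    hence "nat \<lfloor>r\<rfloor> + 1 \<le> i" using that by auto
    moreover have "r < real (nat \<lfloor>r\<rfloor> + 1)" using assms(6)
      by (simp add: of_nat_nat) linarith
    ultimately have "r < real i" by linarith
    then show "dmt_c ns i = dmt_c ns' i" by (rule ceq)
  qed
  have z: "dmt_d_nat ns (dmt_nmin ns) = dmt_d_nat ns' (dmt_nmin ns)"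
    unfolding dmt_d_nat_def nmin by simp
  show ?thesis
    unfolding ns'_def[symmetric] s_def[symmetric] dmt_d_def Let_def nmin
    using deq[of "nat \<lfloor>r\<rfloor>"] deq[of "nat \<lfloor>r\<rfloor> + 1"] deq[of "dmt_nmin ns"] z
    by simp
qed

end
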